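(* Let $X$ be an alphabet with $k\ge 1$ letters and let $n\ge 1$. Every word $w\in X^*$ with $|w|>k\cdot(n-1)^k$ (indeed every word with $|w|>\sum_{i=1}^k (n-1)^i$) has a position $j$ with the following property: for every complete ordered DFA $\mathcal{B}$ over $X$ with at most $n$ states and every state $q$ of $\mathcal{B}$, in the run of $\mathcal{B}$ on $w$ starting in $q$, the state reached before reading the $j$-th letter of $w$ equals the state reached after reading it (i.e. the run cycles at position $j$).
   Context: A DFA is ordered if its states can be linearly ordered so that every transition $p\xrightarrow{a}q$ satisfies $p\le q$. Complete means every state has exactly one outgoing transition per letter. *)

theory Defs
  imports Main
begin

text \<open>States are drawn from a finite,
nonempty set Q of natural numbers (any finite state set can be so encoded); the
transition function delta is total on Q x X with values in Q (complete), and there is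
a linear order r on Q such that every transition p -a-> q satisfies p <= q in r
(ordered).  Initial and final states play no role in the statement and are omitted.\<close>

definition ordered_complete_dfa :: "'a set \<Rightarrow> nat set \<Rightarrow> (nat \<Rightarrow> 'a \<Rightarrow> nat) \<Rightarrow> bool" where
  "ordered_complete_dfa X Q \<delta> \<longleftrightarrow>
     finite Q \<and> Q \<noteq> {} \<and>
     (\<forall>q\<in>Q. \<forall>a\<in>X. \<delta> q a \<in> Q) \<and>
     (\<exists>r. linear_order_on Q r \<and> (\<forall>q\<in>Q. \<forall>a\<in>X. (q, \<delta> q a) \<in> r))"

definition run :: "(nat \<Rightarrow> 'a \<Rightarrow> nat) \<Rightarrow> nat \<Rightarrow> 'a list \<Rightarrow> nat" where
  "run \<delta> q u = foldl \<delta> q u"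

text \<open>Position j (0-based, i.e. the (j+1)-th letter of w) is a cycle position for all
complete ordered DFAs over X with at most n states: for every such DFA and every state q,
the state before reading letter w!j equals the state after reading it.\<close>
definition cycles_at :: "'a set \<Rightarrow> nat \<Rightarrow> 'a list \<Rightarrow> nat \<Rightarrow> bool" where
  "cycles_at X n w j \<longleftrightarrow>
     (\<forall>Q \<delta>. ordered_complete_dfa X Q \<delta> \<and> card Q \<le> n \<longrightarrow>
        (\<forall>q\<in>Q. \<delta> (run \<delta> q (take j w)) (w ! j) = run \<delta> q (take j w)))"

end

theory Submission
  imports Defs
begin

fun chg :: "(nat \<Rightarrow> 'a \<Rightarrow> nat) \<Rightarrow> nat \<Rightarrow> 'a list \<Rightarrow> nat" where
  "chg \<delta> q [] = 0"
| "chg \<delta> q (a#u) = (if \<delta> q a = q then 0 else 1) + chg \<delta> (\<delta> q a) u"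

lemma run_Nil[simp]: "run \<delta> q [] = q" by (simp add: run_def)
lemma run_Cons[simp]: "run \<delta> q (a#u) = run \<delta> (\<delta> q a) u" by (simp add: run_def)
lemma run_append[simp]: "run \<delta> q (u@v) = run \<delta> (run \<delta> q u) v" by (simp add: run_def)

lemma chg_append: "chg \<delta> q (u@v) = chg \<delta> q u + chg \<delta> (run \<delta> q u) v"
  by (induction u arbitrary: q) auto

lemma chg0: "chg \<delta> q u = 0 \<Longrightarrow> \<forall>a\<in>set u. \<delta> q a = q"
  by (induction u arbitrary: q) (auto split: if_splits)

lemma run_fix: "\<forall>a\<in>set u. \<delta> q a = q \<Longrightarrow> run \<delta> q u = q"
  by (induction u) auto

lemma chg_change:
  assumes "j < length w" "\<delta> (run \<delta> q (take j w)) (w!j) \<noteq> run \<delta> q (take j w)"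
  shows "chg \<delta> q (take (Suc j) w) = chg \<delta> q (take j w) + 1"
  using assms by (simp add: take_Suc_conv_app_nth chg_append)

definition full :: "nat \<Rightarrow> 'a list \<Rightarrow> bool" where
  "full m w \<longleftrightarrow> (\<forall>j<length w. \<exists>(\<delta>::nat \<Rightarrow> 'a \<Rightarrow> nat) q.
      \<delta> (run \<delta> q (take j w)) (w!j) \<noteq> run \<delta> q (take j w) \<and> chg \<delta> q (take (Suc j) w) \<le> m)"

lemma full0: "full 0 w \<Longrightarrow> w = []"
proof (rule ccontr)
  assume f: "full 0 w" and ne: "w \<noteq> []"
  then obtain \<delta> q where "\<delta> (run \<delta> q (take 0 w)) (w!0) \<noteq> run \<delta> q (take 0 w)"
    "chg \<delta> q (take (Suc 0) w) \<le> 0"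
    unfolding full_def by blast
  with chg_change[of 0 w \<delta> q] ne show False by simp
qed

lemma full_prefix: "full m w \<Longrightarrow> full m (take p w)"
  unfolding full_def by (auto simp: min_def)

lemma full_suffix:
  assumes f: "full (Suc m) w" and p: "p < length w" and s: "set (take (Suc p) w) = set w"
  shows "full m (drop (Suc p) w)"
  unfolding full_def
proof (intro allI impI)
  fix j assume j: "j < length (drop (Suc p) w)"
  define J where "J = Suc p + j"
  have J: "J < length w" using j by (simp add: J_def)
  then obtain \<delta> q where c: "\<delta> (run \<delta> q (take J w)) (w!J) \<noteq> run \<delta> q (take J w)"
    and b: "chg \<delta> q (take (Suc J) w) \<le> Suc m"
    using f unfolding full_def by blast
  define u where "u = take (Suc p) w"
  define v where "v = drop (Suc p) w"
  have t1: "take J w = u @ take j v" unfolding J_def u_def v_def by (rule take_add)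
  have t2: "take (Suc J) w = u @ take (Suc j) v" unfolding J_def u_def v_def
    by (metis add_Suc_right take_add)
  have n: "w!J = v!j" unfolding J_def v_def using p by simp
  have pos: "chg \<delta> q u \<noteq> 0"
  proof
    assume "chg \<delta> q u = 0"
    then have "\<forall>a\<in>set w. \<delta> q a = q" using chg0 s u_def by metis
    moreover have "set (take J w) \<subseteq> set w" by (rule set_take_subset)
    ultimately have "run \<delta> q (take J w) = q" "\<delta> q (w!J) = q"
      using run_fix[of "take J w" \<delta> q] J by auto
    with c show False by simp
  qed
  show "\<exists>(\<delta>::nat \<Rightarrow> 'a \<Rightarrow> nat) q.
      \<delta> (run \<delta> q (take j (drop (Suc p) w))) (drop (Suc p) w ! j) \<noteq> run \<delta> q (take j (drop (Suc p) w))
       \<and> chg \<delta> q (take (Suc j) (drop (Suc p) w)) \<le> m"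
  proof (intro exI conjI)
    show "\<delta> (run \<delta> (run \<delta> q u) (take j (drop (Suc p) w))) (drop (Suc p) w ! j)
       \<noteq> run \<delta> (run \<delta> q u) (take j (drop (Suc p) w))"
      using c t1 n v_def by simp
    show "chg \<delta> (run \<delta> q u) (take (Suc j) (drop (Suc p) w)) \<le> m"
      using b t2 pos v_def by (simp add: chg_append)
  qed
qed

lemma geom_le: "1 + (\<Sum>i=1..K. (x::nat)^i) \<le> (x+1)^K"
proof (induction K)
  case 0 then show ?case by simp
next
  case (Suc K)
  have "x^K \<le> (x+1)^K" by (rule power_mono) auto
  then have a: "x^Suc K \<le> x*(x+1)^K" by (simp add: mult_le_mono2)
  have b: "(\<Sum>i=1..Suc K. x^i) = (\<Sum>i=1..K. x^i) + x^Suc K" by simp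
  have c: "(x+1)^Suc K = (x+1)^K + x*(x+1)^K" by simp
  show ?case unfolding b c using a Suc.IH by linarith
qed

lemma B_step: "(\<Sum>i=1..k. (Suc m)^i) + 1 + (\<Sum>i=1..Suc k. m^i) \<le> (\<Sum>i=1..Suc k. (Suc m)^i)"
  using geom_le[where K="Suc k" and x=m] by simp

lemma full_bound_step:
  assumes IHm: "\<And>k (w::'a list). full m w \<Longrightarrow> card (set w) \<le> k \<Longrightarrow> length w \<le> (\<Sum>i=1..k. m^i)"
  shows "full (Suc m) (w::'a list) \<Longrightarrow> card (set w) \<le> k \<Longrightarrow> length w \<le> (\<Sum>i=1..k. (Suc m)^i)"
proof (induction k arbitrary: w)
  case 0
  then show ?case by simp
next
  case (Suc k)
  show ?case
  proof (cases "w = []")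
    case True then show ?thesis by simp
  next
    case ne: False
    define P where "P i = (set (take i w) = set w)" for i
    define i0 where "i0 = (LEAST i. P i)"
    have Pl: "P (length w)" by (simp add: P_def)
    have i0le: "i0 \<le> length w" unfolding i0_def using Pl by (rule Least_le)
    have Pi0: "P i0" unfolding i0_def using Pl by (rule LeastI)
    have "i0 \<noteq> 0"
    proof
      assume "i0 = 0" with Pi0 ne show False by (simp add: P_def)
    qed
    then obtain p where ip: "i0 = Suc p" by (cases i0) auto
    have nP: "\<not> P p" using ip unfolding i0_def by (metis lessI not_less_Least)
    have pl: "p < length w" using i0le ip by simp
    have ins: "set (take (Suc p) w) = insert (w!p) (set (take p w))"
      using pl by (simp add: take_Suc_conv_app_nth)
    have s: "set (take (Suc p) w) = set w" using Pi0 ip P_def by simp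
    have notin: "w!p \<notin> set (take p w)" using ins s nP P_def by auto
    have sub: "set (take p w) \<subseteq> set w - {w!p}" using notin set_take_subset by fastforce
    have wp: "w!p \<in> set w" using pl by simp
    have "card (set (take p w)) \<le> card (set w - {w!p})" by (rule card_mono) (use sub in auto)
    also have "\<dots> = card (set w) - 1" using wp by simp
    finally have ck: "card (set (take p w)) \<le> k" using Suc.prems(2) by simp
    have "length (take p w) \<le> (\<Sum>i=1..k. (Suc m)^i)"
      by (rule Suc.IH) (use full_prefix[OF Suc.prems(1)] ck in auto)
    then have h1: "p \<le> (\<Sum>i=1..k. (Suc m)^i)" using pl by simp
    have fs: "full m (drop (Suc p) w)" by (rule full_suffix[OF Suc.prems(1) pl s])
    have "card (set (drop (Suc p) w)) \<le> card (set w)" by (rule card_mono) (auto simp: set_drop_subset)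
    then have "length (drop (Suc p) w) \<le> (\<Sum>i=1..Suc k. m^i)"
      using IHm[OF fs, of "Suc k"] Suc.prems(2) by linarith
    then have "length w \<le> (\<Sum>i=1..k. (Suc m)^i) + 1 + (\<Sum>i=1..Suc k. m^i)"
      using h1 pl by simp
    then show ?thesis using B_step[where k=k and m=m] by linarith
  qed
qed

lemma full_bound: "full m w \<Longrightarrow> card (set w) \<le> k \<Longrightarrow> length w \<le> (\<Sum>i=1..k. m^i)"
proof (induction m arbitrary: k w)
  case 0
  then have "w = []" using full0 by auto
  then show ?case by simp
next
  case (Suc m)
  show ?case by (rule full_bound_step[OF Suc.IH Suc.prems])
qed

lemma dfa_chg:
  assumes d: "ordered_complete_dfa X Q \<delta>" and q: "q \<in> Q" and u: "u \<in> lists X"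
  shows "chg \<delta> q u \<le> card Q - 1"
proof -
  from d obtain r where fQ: "finite Q" and cl: "\<forall>q\<in>Q. \<forall>a\<in>X. \<delta> q a \<in> Q"
    and lo: "linear_order_on Q r" and mo: "\<forall>q\<in>Q. \<forall>a\<in>X. (q, \<delta> q a) \<in> r"
    unfolding ordered_complete_dfa_def by blast
  have refl: "\<And>x. x \<in> Q \<Longrightarrow> (x,x) \<in> r" and tr: "trans r" and as: "antisym r"
    using lo unfolding linear_order_on_def partial_order_on_def preorder_on_def refl_on_def by auto
  define Up where "Up x = {y\<in>Q. (x,y) \<in> r}" for x
  have "chg \<delta> q u \<le> card (Up q) - 1" using q u
  proof (induction u arbitrary: q)
    case Nil then show ?case by simp
  next
    case (Cons a u)
    have a: "a \<in> X" and uX: "u \<in> lists X" using Cons.prems by auto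
    define q' where "q' = \<delta> q a"
    have q'Q: "q' \<in> Q" using cl Cons.prems a q'_def by auto
    have IH: "chg \<delta> q' u \<le> card (Up q') - 1" using Cons.IH[OF q'Q uX] .
    show ?case
    proof (cases "\<delta> q a = q")
      case True then show ?thesis using IH q'_def by simp
    next
      case False
      have qq': "(q,q') \<in> r" using mo Cons.prems a q'_def by auto
      have "Up q' \<subseteq> Up q - {q}"
      proof
        fix y assume "y \<in> Up q'"
        then have y: "y \<in> Q" "(q',y) \<in> r" by (auto simp: Up_def)
        have "(q,y) \<in> r" using tr qq' y(2) by (meson transD)
        moreover have "y \<noteq> q" using as qq' y(2) False q'_def by (metis antisymD)
        ultimately show "y \<in> Up q - {q}" using y by (auto simp: Up_def)
      qed
      then have "card (Up q') \<le> card (Up q - {q})" by (intro card_mono) (auto simp: Up_def fQ)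
      also have "\<dots> = card (Up q) - 1" using refl Cons.prems by (simp add: Up_def)
      finally have c1: "card (Up q') \<le> card (Up q) - 1" .
      have "q' \<in> Up q'" using refl q'Q by (simp add: Up_def)
      then have "card (Up q') \<ge> 1" using fQ by (metis One_nat_def Suc_leI card_gt_0_iff empty_iff Up_def finite_subset mem_Collect_eq subsetI)
      then show ?thesis using IH c1 False q'_def by simp
    qed
  qed
  moreover have "card (Up q) \<le> card Q" using fQ by (intro card_mono) (auto simp: Up_def)
  ultimately show ?thesis by simp
qed

lemma part2:
  assumes "finite X" "card X = k" "n \<ge> 1" "w \<in> lists X" "length w > (\<Sum>i=1..k. (n - 1) ^ i)"
  shows "\<exists>j < length w. cycles_at X n w j"
proof (rule ccontr)
  assume "\<not> ?thesis"
  then have nc: "\<forall>j<length w. \<not> cycles_at X n w j" by auto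
  have "full (n-1) w" unfolding full_def
  proof (intro allI impI)
    fix j assume j: "j < length w"
    then obtain Q \<delta> q where d: "ordered_complete_dfa X Q \<delta>" "card Q \<le> n" "q \<in> Q"
      and c: "\<delta> (run \<delta> q (take j w)) (w ! j) \<noteq> run \<delta> q (take j w)"
      using nc unfolding cycles_at_def by blast
    have "take (Suc j) w \<in> lists X" using assms(4) by (meson in_listsD in_listsI in_set_takeD)
    then have "chg \<delta> q (take (Suc j) w) \<le> n - 1" using dfa_chg[OF d(1) d(3)] d(2) by fastforce
    then show "\<exists>(\<delta>::nat \<Rightarrow> 'a \<Rightarrow> nat) q. \<delta> (run \<delta> q (take j w)) (w ! j) \<noteq> run \<delta> q (take j w) \<and>
      chg \<delta> q (take (Suc j) w) \<le> n - 1" using c by blast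
  qed
  moreover have "card (set w) \<le> k" using assms(1,2,4) by (metis card_mono in_listsD subsetI)
  ultimately have "length w \<le> (\<Sum>i=1..k. (n-1)^i)" by (rule full_bound)
  with assms(5) show False by simp
qed

lemma B_le: "(\<Sum>i=1..k. (m::nat)^i) \<le> k * m^k"
proof -
  have "(\<Sum>i=1..k. m^i) \<le> (\<Sum>i=1..k. m^k)"
  proof (rule sum_mono)
    fix i assume "i \<in> {1..k}"
    then show "m^i \<le> m^k"
      by (cases "m = 0") (auto simp: power_0_left intro: power_increasing)
  qed
  then show ?thesis by simp
qed

theorem mainTheorem4:
  fixes X :: "'a set" and k n :: nat
  assumes "finite X" and "card X = k" and "k \<ge> 1" and "n \<ge> 1"
  shows "(\<forall>w\<in>lists X. length w > k * (n - 1) ^ k \<longrightarrow>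
            (\<exists>j < length w. cycles_at X n w j))
       \<and> (\<forall>w\<in>lists X. length w > (\<Sum>i=1..k. (n - 1) ^ i) \<longrightarrow>
            (\<exists>j < length w. cycles_at X n w j))"
proof (intro conjI ballI impI)
  fix w assume w: "w \<in> lists X" and l: "length w > k * (n - 1) ^ k"
  show "\<exists>j < length w. cycles_at X n w j"
  proof -
    have "(\<Sum>i=1..k. (n - 1) ^ i) < length w" using l B_le[where k=k and m="n-1"] by linarith
    then show ?thesis using part2[OF assms(1,2,4) w] by blast
  qed
next
  fix w assume w: "w \<in> lists X" and l: "length w > (\<Sum>i=1..k. (n - 1) ^ i)"
  then show "\<exists>j < length w. cycles_at X n w j" using part2[OF assms(1,2,4) w] by blast
qed

end
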